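(* Let $N,M_t,M_r$ be positive integers, $P_0>0$, $\sigma^2>0$, $\alpha\in\mathbb C\setminus\{0\}$, $L>0$, $\theta,\theta_1,\theta_2\in\mathbb R$, and let $\mathbf G_t=\sqrt{L}\,\mathbf a(\theta_2)\mathbf c^T(\theta_1)$, $\mathbf G_r=\sqrt{L}\,\mathbf b(\theta_1)\mathbf a^T(\theta_2)$. If $N>1/\sqrt{L}$, then $\mathrm{SNR}_1^\star>\mathrm{SNR}_2^\star$, where $\mathrm{SNR}_i^\star=\max_{\mathbf R,\mathbf\Phi}\mathrm{SNR}_i(\mathbf R,\mathbf\Phi)$ with the maximum over positive semidefinite $\mathbf R\in\mathbb C^{M_t\times M_t}$ with $\mathrm{tr}(\mathbf R)\le P_0$ and $\mathbf\Phi=\mathrm{diag}(e^{j\phi_1},\dots,e^{j\phi_N})$, $\phi_n\in\mathbb R$.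
   Context: $j=\sqrt{-1}$. Fix $\hat d>0$, $\lambda>0$. For a positive integer $K$, $\mathbf s_K(\theta)\in\mathbb C^K$ has $k$-th entry $e^{j\pi(2k-K-1)\hat d\sin\theta/\lambda}$. Set $\mathbf a(\theta)=\mathbf s_N(\theta)$, $\mathbf b(\theta)=\mathbf s_{M_r}(\theta)$, $\mathbf c(\theta)=\mathbf s_{M_t}(\theta)$. Define $\mathrm{SNR}_1(\mathbf R,\mathbf\Phi)=\frac{|\alpha|^2\|\mathbf G_r\mathbf\Phi^T\mathbf a(\theta)\|^2\,\mathbf a^T(\theta)\mathbf\Phi\mathbf G_t\mathbf R\mathbf G_t^H\mathbf\Phi^H\mathbf a^*(\theta)}{\sigma^2}$, $\mathrm{SNR}_2(\mathbf R,\mathbf\Phi)=\frac{|\alpha|^2\|\mathbf b(\theta)\|^2\,\mathbf a^T(\theta)\mathbf\Phi\mathbf G_t\mathbf R\mathbf G_t^H\mathbf\Phi^H\mathbf a^*(\theta)}{\sigma^2}$. *)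

theory Defs
  imports "HOL-Analysis.Analysis"
begin

text \<open>Vectors in C^K are functions nat => complex on indices 0..K-1 (index k here is the
paper's k+1); matrices are functions nat => nat => complex with explicit dimensions.\<close>

definition steer :: "real \<Rightarrow> real \<Rightarrow> nat \<Rightarrow> real \<Rightarrow> nat \<Rightarrow> complex" where
  "steer d lam K th k = exp (\<i> * complex_of_real
      (pi * (2 * real (k + 1) - real K - 1) * d * sin th / lam))"

definition Gt :: "real \<Rightarrow> real \<Rightarrow> nat \<Rightarrow> nat \<Rightarrow> real \<Rightarrow> real \<Rightarrow> real \<Rightarrow> nat \<Rightarrow> nat \<Rightarrow> complex" where
  "Gt d lam N Mt L th1 th2 i m = complex_of_real (sqrt L) * steer d lam N th2 i * steer d lam Mt th1 m"

definition Gr :: "real \<Rightarrow> real \<Rightarrow> nat \<Rightarrow> nat \<Rightarrow> real \<Rightarrow> real \<Rightarrow> real \<Rightarrow> nat \<Rightarrow> nat \<Rightarrow> complex" where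
  "Gr d lam N Mr L th1 th2 r i = complex_of_real (sqrt L) * steer d lam Mr th1 r * steer d lam N th2 i"

definition Phi :: "(nat \<Rightarrow> real) \<Rightarrow> nat \<Rightarrow> nat \<Rightarrow> complex" where
  "Phi ph i i' = (if i = i' then exp (\<i> * complex_of_real (ph i)) else 0)"

definition quad_term :: "real \<Rightarrow> real \<Rightarrow> nat \<Rightarrow> nat \<Rightarrow> real \<Rightarrow> real \<Rightarrow> real \<Rightarrow> real
     \<Rightarrow> (nat \<Rightarrow> nat \<Rightarrow> complex) \<Rightarrow> (nat \<Rightarrow> real) \<Rightarrow> complex" where
  "quad_term d lam N Mt L th th1 th2 R ph =
     (let v = (\<lambda>m. \<Sum>i<N. \<Sum>i'<N. steer d lam N th i * Phi ph i i' * Gt d lam N Mt L th1 th2 i' m)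
      in \<Sum>m<Mt. \<Sum>m'<Mt. v m * R m m' * cnj (v m'))"

definition sqnorm :: "nat \<Rightarrow> (nat \<Rightarrow> complex) \<Rightarrow> real" where
  "sqnorm K x = (\<Sum>k<K. (cmod (x k))\<^sup>2)"

definition SNR1 :: "real \<Rightarrow> real \<Rightarrow> nat \<Rightarrow> nat \<Rightarrow> nat \<Rightarrow> real \<Rightarrow> real \<Rightarrow> real \<Rightarrow> real \<Rightarrow> complex \<Rightarrow> real
     \<Rightarrow> (nat \<Rightarrow> nat \<Rightarrow> complex) \<Rightarrow> (nat \<Rightarrow> real) \<Rightarrow> complex" where
  "SNR1 d lam N Mt Mr L th th1 th2 \<alpha> \<sigma>2 R ph =
     complex_of_real ((cmod \<alpha>)\<^sup>2 *
       sqnorm Mr (\<lambda>r. \<Sum>i<N. \<Sum>i'<N. Gr d lam N Mr L th1 th2 r i * Phi ph i' i * steer d lam N th i'))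
     * quad_term d lam N Mt L th th1 th2 R ph / complex_of_real \<sigma>2"

definition SNR2 :: "real \<Rightarrow> real \<Rightarrow> nat \<Rightarrow> nat \<Rightarrow> nat \<Rightarrow> real \<Rightarrow> real \<Rightarrow> real \<Rightarrow> real \<Rightarrow> complex \<Rightarrow> real
     \<Rightarrow> (nat \<Rightarrow> nat \<Rightarrow> complex) \<Rightarrow> (nat \<Rightarrow> real) \<Rightarrow> complex" where
  "SNR2 d lam N Mt Mr L th th1 th2 \<alpha> \<sigma>2 R ph =
     complex_of_real ((cmod \<alpha>)\<^sup>2 * sqnorm Mr (steer d lam Mr th))
     * quad_term d lam N Mt L th th1 th2 R ph / complex_of_real \<sigma>2"

definition psd :: "nat \<Rightarrow> (nat \<Rightarrow> nat \<Rightarrow> complex) \<Rightarrow> bool" where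
  "psd K R \<longleftrightarrow> (\<forall>i<K. \<forall>j<K. R i j = cnj (R j i)) \<and>
     (\<forall>x :: nat \<Rightarrow> complex. 0 \<le> Re (\<Sum>i<K. \<Sum>j<K. cnj (x i) * R i j * x j))"

definition trace :: "nat \<Rightarrow> (nat \<Rightarrow> nat \<Rightarrow> complex) \<Rightarrow> complex" where
  "trace K R = (\<Sum>i<K. R i i)"

text \<open>Feasible set: R PSD with tr(R) <= P0 (trace of a Hermitian matrix is real), arbitrary phases.\<close>
definition feasible :: "nat \<Rightarrow> real \<Rightarrow> (nat \<Rightarrow> nat \<Rightarrow> complex) \<Rightarrow> bool" where
  "feasible Mt P0 R \<longleftrightarrow> psd Mt R \<and> Re (trace Mt R) \<le> P0"

end

theory Submission
  imports Defs
begin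
lemma steer_norm[simp]: "cmod (steer d lam K th k) = 1"
  unfolding steer_def by (simp add: norm_exp_i_times)
lemma steer_cnj[simp]: "steer d lam K th k * cnj (steer d lam K th k) = 1"
  by (metis complex_norm_square norm_one of_real_1 one_power2 steer_norm)

lemma Phi_sum1: "i < N \<Longrightarrow> (\<Sum>i'<N. f i' * Phi ph i' i * g i') = f i * exp (\<i> * of_real (ph i)) * g i"
proof -
  assume "i < N"
  have "(\<Sum>i'<N. f i' * Phi ph i' i * g i') = (\<Sum>i'<N. if i' = i then f i * exp (\<i> * of_real (ph i)) * g i else 0)"
    by (rule sum.cong) (auto simp: Phi_def)
  then show ?thesis using \<open>i < N\<close> by simp
qed
lemma Phi_sum2: "i < N \<Longrightarrow> (\<Sum>i'<N. f i' * Phi ph i i' * g i') = f i * exp (\<i> * of_real (ph i)) * g i"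
proof -
  assume "i < N"
  have "(\<Sum>i'<N. f i' * Phi ph i i' * g i') = (\<Sum>i'<N. if i = i' then f i * exp (\<i> * of_real (ph i)) * g i else 0)"
    by (rule sum.cong) (auto simp: Phi_def)
  then show ?thesis using \<open>i < N\<close> by simp
qed

lemma L1:
  "(\<Sum>i<N. \<Sum>i'<N. Gr d lam N Mr L th1 th2 r i * Phi ph i' i * steer d lam N th i')
   = of_real (sqrt L) * steer d lam Mr th1 r *
     (\<Sum>i<N. steer d lam N th2 i * exp (\<i> * of_real (ph i)) * steer d lam N th i)"
proof -
  have "(\<Sum>i<N. \<Sum>i'<N. Gr d lam N Mr L th1 th2 r i * Phi ph i' i * steer d lam N th i')
     = (\<Sum>i<N. Gr d lam N Mr L th1 th2 r i * exp (\<i> * of_real (ph i)) * steer d lam N th i)"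
    by (rule sum.cong) (auto simp: Phi_sum1[where f="\<lambda>_. Gr d lam N Mr L th1 th2 r _"])
  also have "\<dots> = of_real (sqrt L) * steer d lam Mr th1 r *
     (\<Sum>i<N. steer d lam N th2 i * exp (\<i> * of_real (ph i)) * steer d lam N th i)"
    by (simp add: Gr_def sum_distrib_left mult_ac)
  finally show ?thesis .
qed

lemma L1n:
  assumes "L > 0"
  shows "sqnorm Mr (\<lambda>r. \<Sum>i<N. \<Sum>i'<N. Gr d lam N Mr L th1 th2 r i * Phi ph i' i * steer d lam N th i')
   = real Mr * L * (cmod (\<Sum>i<N. steer d lam N th2 i * exp (\<i> * of_real (ph i)) * steer d lam N th i))\<^sup>2"
  using assms by (simp add: L1 sqnorm_def norm_mult power_mult_distrib)

lemma L2:
  assumes "L > 0"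
  shows "quad_term d lam N Mt L th th1 th2 R ph =
    of_real (L * (cmod (\<Sum>i<N. steer d lam N th2 i * exp (\<i> * of_real (ph i)) * steer d lam N th i))\<^sup>2)
    * (\<Sum>m<Mt. \<Sum>m'<Mt. steer d lam Mt th1 m * R m m' * cnj (steer d lam Mt th1 m'))"
proof -
  define S where "S = (\<Sum>i<N. steer d lam N th2 i * exp (\<i> * of_real (ph i)) * steer d lam N th i)"
  have v: "(\<Sum>i<N. \<Sum>i'<N. steer d lam N th i * Phi ph i i' * Gt d lam N Mt L th1 th2 i' m)
     = of_real (sqrt L) * steer d lam Mt th1 m * S" for m
  proof -
    have "(\<Sum>i<N. \<Sum>i'<N. steer d lam N th i * Phi ph i i' * Gt d lam N Mt L th1 th2 i' m)
     = (\<Sum>i<N. steer d lam N th i * exp (\<i> * of_real (ph i)) * Gt d lam N Mt L th1 th2 i m)"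
      by (rule sum.cong) (auto simp: Phi_sum2)
    also have "\<dots> = of_real (sqrt L) * steer d lam Mt th1 m * S"
      by (simp add: Gt_def S_def sum_distrib_left mult_ac)
    finally show ?thesis .
  qed
  have sq: "complex_of_real L = complex_of_real (sqrt L) * complex_of_real (sqrt L)"
    using assms by (simp flip: of_real_mult)
  have SS: "S * cnj S = of_real ((cmod S)\<^sup>2)" by (metis complex_norm_square of_real_power)
  have "quad_term d lam N Mt L th th1 th2 R ph = 
     (\<Sum>m<Mt. \<Sum>m'<Mt. (of_real (sqrt L) * steer d lam Mt th1 m * S) * R m m' * cnj (of_real (sqrt L) * steer d lam Mt th1 m' * S))"
    unfolding quad_term_def Let_def v by simp
  also have "\<dots> = (\<Sum>m<Mt. \<Sum>m'<Mt. of_real L * (S * cnj S) * (steer d lam Mt th1 m * R m m' * cnj (steer d lam Mt th1 m')))"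
    using assms by (intro sum.cong refl) (simp only: sq mult_ac complex_cnj_mult complex_cnj_complex_of_real)
  also have "\<dots> = of_real (L * (cmod S)\<^sup>2) * (\<Sum>m<Mt. \<Sum>m'<Mt. steer d lam Mt th1 m * R m m' * cnj (steer d lam Mt th1 m'))"
    using assms by (simp add: SS sum_distrib_left mult_ac)
  finally show ?thesis by (simp add: S_def)
qed
lemma sum_two:
  assumes "finite A" "i \<in> A" "j \<in> A" "i \<noteq> j" "\<And>b. b \<in> A \<Longrightarrow> b \<noteq> i \<Longrightarrow> b \<noteq> j \<Longrightarrow> g b = 0"
  shows "sum g A = g i + g j"
proof -
  have "sum g A = sum g {i, j}"
    by (rule sum.mono_neutral_right) (use assms in auto)
  then show ?thesis using assms by simp
qed

lemma psd_form: "psd K R \<Longrightarrow> 0 \<le> Re (\<Sum>i<K. \<Sum>j<K. cnj (x i) * R i j * x j)"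
  unfolding psd_def by blast

lemma psd_diag:
  assumes "psd K R" "i < K"
  shows "0 \<le> Re (R i i)" "Im (R i i) = 0"
proof -
  define x :: "nat \<Rightarrow> complex" where "x = (\<lambda>k. if k = i then 1 else 0)"
  have "(\<Sum>a<K. \<Sum>b<K. cnj (x a) * R a b * x b) = (\<Sum>a<K. if a = i then R i i else 0)"
    by (rule sum.cong) (auto simp: x_def if_distrib cong: if_cong)
  also have "\<dots> = R i i" using assms by simp
  moreover have "0 \<le> Re (\<Sum>a<K. \<Sum>b<K. cnj (x a) * R a b * x b)"
    by (rule psd_form[OF assms(1)])
  ultimately show "0 \<le> Re (R i i)" by simp
  have "R i i = cnj (R i i)" using assms unfolding psd_def by blast
  then show "Im (R i i) = 0" by (metis cnj.sel(2) complex_eq_iff neg_equal_zero)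
qed

lemma psd_off:
  assumes "psd K R" "i < K" "j < K" "i \<noteq> j"
  shows "0 \<le> Re (R i i + R i j * t + cnj t * R j i + cnj t * t * R j j)"
proof -
  define x :: "nat \<Rightarrow> complex" where "x = (\<lambda>k. if k = i then 1 else if k = j then t else 0)"
  have inner: "(\<Sum>b<K. cnj (x a) * R a b * x b) = cnj (x a) * R a i + cnj (x a) * R a j * t" for a
    by (subst sum_two[of _ i j]) (use assms in \<open>auto simp: x_def\<close>)
  have "(\<Sum>a<K. \<Sum>b<K. cnj (x a) * R a b * x b) = (\<Sum>a<K. cnj (x a) * R a i + cnj (x a) * R a j * t)"
    by (simp add: inner)
  also have "\<dots> = R i i + R i j * t + cnj t * R j i + cnj t * t * R j j"
    by (subst sum_two[of _ i j]) (use assms in \<open>auto simp: x_def algebra_simps\<close>)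
  moreover have "0 \<le> Re (\<Sum>a<K. \<Sum>b<K. cnj (x a) * R a b * x b)"
    by (rule psd_form[OF assms(1)])
  ultimately show ?thesis by simp
qed

lemma psd_entry:
  assumes "psd K R" "i < K" "j < K"
  shows "2 * cmod (R i j) \<le> Re (R i i) + Re (R j j)"
proof (cases "i = j")
  case True
  then have "cmod (R i j) = Re (R i i)" using psd_diag[OF assms(1,2)]
    by (simp add: cmod_eq_Re)
  then show ?thesis using True by simp
next
  case ne: False
  show ?thesis
  proof (cases "R i j = 0")
    case True
    then show ?thesis using psd_diag[OF assms(1,2)] psd_diag[OF assms(1,3)] by simp
  next
    case False
    define r where "r = cmod (R i j)"
    have r0: "r > 0" using False r_def by simp
    define t where "t = - cnj (R i j) / of_real r"
    have h: "R j i = cnj (R i j)" using assms unfolding psd_def by blast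
    have rr: "R i j * cnj (R i j) = of_real (r^2)" unfolding r_def
      by (metis complex_norm_square of_real_power)
    have e1: "R i j * t = - of_real r"
      using r0 rr by (simp add: t_def field_simps power2_eq_square)
    have e2: "cnj t * R j i = - of_real r"
    proof -
      have "cnj t * R j i = cnj (R i j * t)" by (simp add: h mult.commute)
      then show ?thesis by (simp add: e1)
    qed
    have e3: "cnj t * t = 1"
    proof -
      have "cnj t * t = cnj (R i j) * R i j / of_real (r^2)"
        by (simp add: t_def power2_eq_square)
      then show ?thesis using rr r0 by (simp add: mult.commute)
    qed
    have "0 \<le> Re (R i i + R i j * t + cnj t * R j i + cnj t * t * R j j)"
      by (rule psd_off[OF assms ne])
    then show ?thesis by (simp add: e1 e2 e3 r_def)
  qed
qed

lemma Q_bound: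
  assumes "psd K R" "\<And>k. cmod (c k) = 1"
  shows "cmod (\<Sum>m<K. \<Sum>m'<K. c m * R m m' * cnj (c m')) \<le> real K * Re (trace K R)"
    and "0 \<le> Re (\<Sum>m<K. \<Sum>m'<K. c m * R m m' * cnj (c m'))"
proof -
  have "cmod (\<Sum>m<K. \<Sum>m'<K. c m * R m m' * cnj (c m')) \<le> (\<Sum>m<K. cmod (\<Sum>m'<K. c m * R m m' * cnj (c m')))"
    by (rule norm_sum)
  also have "\<dots> \<le> (\<Sum>m<K. \<Sum>m'<K. cmod (c m * R m m' * cnj (c m')))"
    by (intro sum_mono norm_sum)
  also have "\<dots> = (\<Sum>m<K. \<Sum>m'<K. cmod (R m m'))"
    using assms(2) by (simp add: norm_mult)
  also have "\<dots> \<le> (\<Sum>m<K. \<Sum>m'<K. (Re (R m m) + Re (R m' m')) / 2)"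
    using psd_entry[OF assms(1)] by (intro sum_mono) force
  also have "\<dots> = real K * Re (trace K R)"
    by (simp add: trace_def sum.distrib add_divide_distrib sum_divide_distrib[symmetric] sum_distrib_left[symmetric] Re_sum)
  finally show "cmod (\<Sum>m<K. \<Sum>m'<K. c m * R m m' * cnj (c m')) \<le> real K * Re (trace K R)" .
  have "0 \<le> Re (\<Sum>i<K. \<Sum>j<K. cnj ((\<lambda>k. cnj (c k)) i) * R i j * (\<lambda>k. cnj (c k)) j)"
    by (rule psd_form[OF assms(1)])
  then show "0 \<le> Re (\<Sum>m<K. \<Sum>m'<K. c m * R m m' * cnj (c m'))" by simp
qed
lemma S_bound: "cmod (\<Sum>i<N. steer d lam N th2 i * exp (\<i> * of_real (ph i)) * steer d lam N th i) \<le> real N"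
proof -
  have "cmod (\<Sum>i<N. steer d lam N th2 i * exp (\<i> * of_real (ph i)) * steer d lam N th i)
     \<le> (\<Sum>i<N. cmod (steer d lam N th2 i * exp (\<i> * of_real (ph i)) * steer d lam N th i))"
    by (rule norm_sum)
  also have "\<dots> = real N" by (simp add: norm_mult norm_exp_i_times)
  finally show ?thesis .
qed

lemma S_opt:
  "steer d lam N th2 i * exp (\<i> * of_real (- (pi * (2 * real (i + 1) - real N - 1) * d * sin th2 / lam
     + pi * (2 * real (i + 1) - real N - 1) * d * sin th / lam))) * steer d lam N th i = 1"
  unfolding steer_def by (simp flip: exp_add add: algebra_simps)

lemma sqnorm_steer: "sqnorm K (steer d lam K th) = real K"
  by (simp add: sqnorm_def)

lemma SNR1_eq:
  assumes "L > 0"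
  shows "Re (SNR1 d lam N Mt Mr L th th1 th2 \<alpha> \<sigma>2 R ph) =
    (cmod \<alpha>)\<^sup>2 * real Mr * L / \<sigma>2 * L * (cmod (\<Sum>i<N. steer d lam N th2 i * exp (\<i> * of_real (ph i)) * steer d lam N th i))^4
    * Re (\<Sum>m<Mt. \<Sum>m'<Mt. steer d lam Mt th1 m * R m m' * cnj (steer d lam Mt th1 m'))"
  using assms by (simp add: SNR1_def L1n L2 Re_divide_of_real)

lemma SNR2_eq:
  assumes "L > 0"
  shows "Re (SNR2 d lam N Mt Mr L th th1 th2 \<alpha> \<sigma>2 R ph) =
    (cmod \<alpha>)\<^sup>2 * real Mr * L / \<sigma>2 * (cmod (\<Sum>i<N. steer d lam N th2 i * exp (\<i> * of_real (ph i)) * steer d lam N th i))^2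
    * Re (\<Sum>m<Mt. \<Sum>m'<Mt. steer d lam Mt th1 m * R m m' * cnj (steer d lam Mt th1 m'))"
  using assms by (simp add: SNR2_def L2 sqnorm_steer Re_divide_of_real)
lemma nsq: "cnj z * c * z = c * complex_of_real ((cmod z)\<^sup>2)"
  by (metis complex_norm_square mult.commute mult.left_commute of_real_power)

lemma diag_sum: fixes f g :: "nat \<Rightarrow> complex" shows "i < K \<Longrightarrow> (\<Sum>j<K. f j * (if i = j then c else 0) * g j) = f i * c * g i"
proof -
  assume "i < K"
  have "(\<Sum>j<K. f j * (if i = j then c else 0) * g j) = (\<Sum>j<K. if i = j then f i * c * g i else 0)"
    by (rule sum.cong) auto
  then show ?thesis using \<open>i < K\<close> by simp
qed

theorem theorem1:
  fixes d lam P0 \<sigma>2 L th th1 th2 :: real and N Mt Mr :: nat and \<alpha> :: complex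
  assumes "d > 0" and "lam > 0"
    and "N > 0" and "Mt > 0" and "Mr > 0"
    and "P0 > 0" and "\<sigma>2 > 0" and "\<alpha> \<noteq> 0" and "L > 0"
    and "real N > 1 / sqrt L"
  shows "(SUP (R, ph) \<in> {(R, ph). feasible Mt P0 R}. Re (SNR1 d lam N Mt Mr L th th1 th2 \<alpha> \<sigma>2 R ph))
       > (SUP (R, ph) \<in> {(R, ph). feasible Mt P0 R}. Re (SNR2 d lam N Mt Mr L th th1 th2 \<alpha> \<sigma>2 R ph))"
proof -
  define A :: "((nat \<Rightarrow> nat \<Rightarrow> complex) \<times> (nat \<Rightarrow> real)) set" where "A = {(R, ph). feasible Mt P0 R}"
  define F1 where "F1 = (\<lambda>(R, ph). Re (SNR1 d lam N Mt Mr L th th1 th2 \<alpha> \<sigma>2 R ph))"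
  define F2 where "F2 = (\<lambda>(R, ph). Re (SNR2 d lam N Mt Mr L th th1 th2 \<alpha> \<sigma>2 R ph))"
  define S where "S = (\<lambda>ph. cmod (\<Sum>i<N. steer d lam N th2 i * exp (\<i> * of_real (ph i)) * steer d lam N th i))"
  define Q where "Q = (\<lambda>R. Re (\<Sum>m<Mt. \<Sum>m'<Mt. steer d lam Mt th1 m * R m m' * cnj (steer d lam Mt th1 m')))"
  define K where "K = (cmod \<alpha>)\<^sup>2 * real Mr * L / \<sigma>2"
  have K0: "K > 0" unfolding K_def using assms by simp
  have F1e: "F1 (R, ph) = K * L * S ph ^ 4 * Q R" for R ph
    unfolding F1_def K_def S_def Q_def using SNR1_eq[OF assms(9)] by simp
  have F2e: "F2 (R, ph) = K * S ph ^ 2 * Q R" for R ph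
    unfolding F2_def K_def S_def Q_def using SNR2_eq[OF assms(9)] by simp
  have S0: "0 \<le> S ph" "S ph \<le> real N" for ph unfolding S_def using S_bound by auto
  have Qb: "0 \<le> Q R" "Q R \<le> real Mt * P0" if "feasible Mt P0 R" for R
  proof -
    have p: "psd Mt R" and tr: "Re (trace Mt R) \<le> P0" using that unfolding feasible_def by auto
    show "0 \<le> Q R" unfolding Q_def by (rule Q_bound(2)[OF p]) simp
    have "Q R \<le> cmod (\<Sum>m<Mt. \<Sum>m'<Mt. steer d lam Mt th1 m * R m m' * cnj (steer d lam Mt th1 m'))"
      unfolding Q_def by (rule complex_Re_le_cmod)
    also have "\<dots> \<le> real Mt * Re (trace Mt R)" by (rule Q_bound(1)[OF p]) simp
    also have "\<dots> \<le> real Mt * P0" using tr by (simp add: mult_left_mono)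
    finally show "Q R \<le> real Mt * P0" .
  qed
  define ph0 :: "nat \<Rightarrow> real" where "ph0 = (\<lambda>i. - (pi * (2 * real (i + 1) - real N - 1) * d * sin th2 / lam
     + pi * (2 * real (i + 1) - real N - 1) * d * sin th / lam))"
  have Sph0: "S ph0 = real N" unfolding S_def ph0_def by (simp only: S_opt sum.neutral_const) simp
  define R0 :: "nat \<Rightarrow> nat \<Rightarrow> complex" where "R0 = (\<lambda>m m'. if m = m' then of_real (P0 / real Mt) else 0)"
  have R0f: "feasible Mt P0 R0"
  proof -
    have "Re (\<Sum>i<Mt. \<Sum>j<Mt. cnj (x i) * R0 i j * x j) = (\<Sum>i<Mt. P0 / real Mt * (cmod (x i))\<^sup>2)" for x
    proof -
      have "(\<Sum>i<Mt. \<Sum>j<Mt. cnj (x i) * R0 i j * x j) = (\<Sum>i<Mt. cnj (x i) * of_real (P0 / real Mt) * x i)"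
        by (rule sum.cong) (auto simp: R0_def diag_sum)
      also have "\<dots> = (\<Sum>i<Mt. of_real (P0 / real Mt * (cmod (x i))\<^sup>2))"
        by (rule sum.cong) (simp_all only: nsq of_real_mult)
      finally show ?thesis by (simp only: Re_sum Re_complex_of_real)
    qed
    moreover have "0 \<le> (\<Sum>i<Mt. P0 / real Mt * (cmod (x i))\<^sup>2)" for x
      using assms by (intro sum_nonneg) simp
    ultimately have "psd Mt R0" unfolding psd_def by (auto simp: R0_def)
    moreover have "Re (trace Mt R0) = P0" using assms by (simp add: trace_def R0_def)
    ultimately show ?thesis unfolding feasible_def by simp
  qed
  have QR0: "Q R0 = P0"
  proof -
    have "(\<Sum>m<Mt. \<Sum>m'<Mt. steer d lam Mt th1 m * R0 m m' * cnj (steer d lam Mt th1 m'))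
       = (\<Sum>m<Mt. of_real (P0 / real Mt))"
      by (rule sum.cong) (auto simp: R0_def diag_sum)
    then show ?thesis using assms unfolding Q_def by simp
  qed
  have inA: "(R0, ph0) \<in> A" using R0f A_def by simp
  have bdd: "bdd_above (F1 ` A)"
  proof (rule bdd_aboveI2)
    fix x assume "x \<in> A"
    then obtain R ph where x: "x = (R, ph)" and f: "feasible Mt P0 R" unfolding A_def by auto
    have "S ph ^ 4 * Q R \<le> real N ^ 4 * (real Mt * P0)"
      using Qb[OF f] S0[of ph] by (intro mult_mono power_mono) auto
    then show "F1 x \<le> K * L * (real N ^ 4 * (real Mt * P0))"
      unfolding x F1e using K0 assms(9) by (simp add: mult.assoc mult_left_mono)
  qed
  have LN: "L * real N ^ 2 > 1"
  proof -
    have "1 < real N * sqrt L" using assms(9,10) by (simp add: divide_less_eq)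
    then have "1 < (real N * sqrt L)^2" by (simp add: one_less_power)
    then show ?thesis using assms(9) by (simp add: power_mult_distrib mult.commute)
  qed
  have up1: "F1 (R0, ph0) \<le> Sup (F1 ` A)" by (rule cSUP_upper[OF inA bdd])
  have pos: "F1 (R0, ph0) > 0" unfolding F1e Sph0 QR0 using K0 assms by simp
  have "Sup (F2 ` A) \<le> Sup (F1 ` A) / (L * real N ^ 2)"
  proof (rule cSUP_least)
    show "A \<noteq> {}" using inA by auto
    fix x assume "x \<in> A"
    then obtain R ph where x: "x = (R, ph)" and f: "feasible Mt P0 R" unfolding A_def by auto
    have "(R, ph0) \<in> A" using f A_def by simp
    then have u: "F1 (R, ph0) \<le> Sup (F1 ` A)" by (rule cSUP_upper[OF _ bdd])
    have "S ph ^ 2 * Q R \<le> real N ^ 2 * Q R"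
      using Qb[OF f] S0[of ph] by (intro mult_right_mono power_mono) auto
    then have "F2 x \<le> K * (real N ^ 2 * Q R)"
      unfolding x F2e using K0 by (simp add: mult.assoc mult_left_mono)
    also have "\<dots> = F1 (R, ph0) / (L * real N ^ 2)"
      unfolding F1e Sph0 using assms(3,9) by (simp add: field_simps power4_eq_xxxx power2_eq_square)
    also have "\<dots> \<le> Sup (F1 ` A) / (L * real N ^ 2)"
      using u LN by (simp add: divide_right_mono)
    finally show "F2 x \<le> Sup (F1 ` A) / (L * real N ^ 2)" .
  qed
  also have "\<dots> < Sup (F1 ` A)"
    using up1 pos LN by (simp add: divide_less_eq)
  finally have "Sup (F2 ` A) < Sup (F1 ` A)" .
  then show ?thesis unfolding A_def F1_def F2_def by simp
qed
end
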